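(* Let $p$ be a prime, let $q:\mathbb{F}_p^n\to\mathbb{F}_p$ be a quadratic form and let $b:\mathbb{F}_p^n\times\mathbb{F}_p^n\to\mathbb{F}_p$ be a bilinear form such that $q(x)=b(x,x)$ for every $x\in\mathbb{F}_p^n$. Then $\mathrm{erk}\,q\le\mathrm{erk}\,b$.
   Context: The essential rank of the quadratic form $q$ is $\mathrm{erk}\,q=\min\mathrm{rk}(q+q_\Delta)$ over all diagonal quadratic forms $q_\Delta(x)=\sum_i a_ix_i^2$, where for a polynomial $Q$ of degree $2$, $\mathrm{rk}\,Q$ is the least $k$ such that $Q=\sum_{i=1}^k Q_iR_i$ with polynomials $Q_i,R_i$ of degree at most $1$ (and $\mathrm{rk}$ of a polynomial of degree at most $1$ is defined via the degree-$\le1$ conventions; here we use the degree-2 rank). The essential (partition) rank of the bilinear form $b$ is $\mathrm{erk}\,b=\min\mathrm{rank}(b+b_\Delta)$ over all diagonal bilinear forms $b_\Delta(x,y)=\sum_i c_ix_iy_i$, where rank is matrix rank. *)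

theory Defs
  imports Main "Jordan_Normal_Form.DL_Rank"
begin

(* Vectors of F^n are functions nat => 'a, only coordinates i < n matter.
   A polynomial of degree <= 2 in x_0..x_{n-1} is represented by a triple
   (c, l, M) meaning  c + sum_i l i * x_i + sum_{i,j} M i j * x_i * x_j.
   Equality of such polynomials (as formal polynomials, not as functions)
   is equality of coefficients of the monomials 1, x_i, x_i x_j (i <= j). *)

type_synonym 'a poly2 = "'a \<times> (nat \<Rightarrow> 'a) \<times> (nat \<Rightarrow> nat \<Rightarrow> 'a)"
type_synonym 'a poly1 = "'a \<times> (nat \<Rightarrow> 'a)"

definition mono_coeff :: "(nat \<Rightarrow> nat \<Rightarrow> 'a::comm_ring_1) \<Rightarrow> nat \<Rightarrow> nat \<Rightarrow> 'a" where
  "mono_coeff M i j = (if i = j then M i i else M i j + M j i)"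

definition poly2_eq :: "nat \<Rightarrow> 'a::comm_ring_1 poly2 \<Rightarrow> 'a poly2 \<Rightarrow> bool" where
  "poly2_eq n P R \<longleftrightarrow>
     fst P = fst R \<and>
     (\<forall>i<n. fst (snd P) i = fst (snd R) i) \<and>
     (\<forall>i<n. \<forall>j<n. i \<le> j \<longrightarrow> mono_coeff (snd (snd P)) i j = mono_coeff (snd (snd R)) i j)"

definition poly1_mult :: "'a::comm_ring_1 poly1 \<Rightarrow> 'a poly1 \<Rightarrow> 'a poly2" where
  "poly1_mult A B = (fst A * fst B, (\<lambda>i. fst A * snd B i + fst B * snd A i),
                     (\<lambda>i j. snd A i * snd B j))"

definition poly2_sum :: "(nat \<Rightarrow> 'a::comm_ring_1 poly2) \<Rightarrow> nat \<Rightarrow> 'a poly2" where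
  "poly2_sum F k = ((\<Sum>t<k. fst (F t)), (\<lambda>i. \<Sum>t<k. fst (snd (F t)) i),
                    (\<lambda>i j. \<Sum>t<k. snd (snd (F t)) i j))"

definition rk_poly2 :: "nat \<Rightarrow> 'a::comm_ring_1 poly2 \<Rightarrow> nat" where
  "rk_poly2 n P = (LEAST k. \<exists>A B :: nat \<Rightarrow> 'a poly1.
      poly2_eq n P (poly2_sum (\<lambda>t. poly1_mult (A t) (B t)) k))"

definition qform_poly :: "nat \<Rightarrow> (nat \<Rightarrow> nat \<Rightarrow> 'a::comm_ring_1) \<Rightarrow> 'a poly2" where
  "qform_poly n Q = (0, (\<lambda>_. 0), (\<lambda>i j. if i < n \<and> j < n then Q i j else 0))"

definition qform_eval :: "nat \<Rightarrow> (nat \<Rightarrow> nat \<Rightarrow> 'a::comm_ring_1) \<Rightarrow> (nat \<Rightarrow> 'a) \<Rightarrow> 'a" where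
  "qform_eval n Q x = (\<Sum>i<n. \<Sum>j<n. Q i j * x i * x j)"

definition bform_eval :: "nat \<Rightarrow> (nat \<Rightarrow> nat \<Rightarrow> 'a::comm_ring_1) \<Rightarrow> (nat \<Rightarrow> 'a) \<Rightarrow> (nat \<Rightarrow> 'a) \<Rightarrow> 'a" where
  "bform_eval n B x y = (\<Sum>i<n. \<Sum>j<n. B i j * x i * y j)"

definition erk_qform :: "nat \<Rightarrow> (nat \<Rightarrow> nat \<Rightarrow> 'a::comm_ring_1) \<Rightarrow> nat" where
  "erk_qform n Q = (LEAST r. \<exists>a :: nat \<Rightarrow> 'a.
      r = rk_poly2 n (qform_poly n (\<lambda>i j. Q i j + (if i = j then a i else 0))))"

definition erk_bform :: "nat \<Rightarrow> (nat \<Rightarrow> nat \<Rightarrow> 'a::field) \<Rightarrow> nat" where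
  "erk_bform n B = (LEAST r. \<exists>c :: nat \<Rightarrow> 'a.
      r = vec_space.rank n (mat n n (\<lambda>(i, j). B i j + (if i = j then c i else 0))))"

end

theory Submission
  imports Defs
begin
lemma rank_factor:
  fixes A :: "'a::field mat"
  assumes A: "A \<in> carrier_mat n nc"
  shows "\<exists>u v. \<forall>i<n. \<forall>j<nc. A $$ (i,j) = (\<Sum>t<vec_space.rank n A. u t i * v t j)"
proof -
  interpret vec_space "TYPE('a)" n .
  obtain S where S: "maximal S (\<lambda>T. T \<subseteq> set (cols A) \<and> lin_indpt T)"
    using maximal_exists[of "(\<lambda>T. T \<subseteq> set (cols A) \<and> lin_indpt T)" "card (set (cols A))" "{}"]
    by (meson List.finite_set card_mono empty_iff empty_subsetI finite_lin_indpt2 rev_finite_subset)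
  have rk: "rank A = card S" using rank_card_indpt[OF A S] .
  have Ssub: "S \<subseteq> set (cols A)" and Sli: "lin_indpt S" using S unfolding maximal_def by auto
  have colsC: "set (cols A) \<subseteq> carrier_vec n" using A cols_dim by blast
  have SC: "S \<subseteq> carrier_vec n" using Ssub colsC by blast
  have Sfin: "finite S" using Ssub finite_subset by blast
  have inspan: "w \<in> span S" if w: "w \<in> set (cols A)" for w
  proof (cases "w \<in> S")
    case True then show ?thesis using in_own_span[OF SC] by blast
  next
    case False
    have "\<not> lin_indpt (S \<union> {w})"
    proof
      assume "lin_indpt (S \<union> {w})"
      then have "S \<union> {w} = S" using S w Ssub unfolding maximal_def
        by (metis Un_least Un_upper1 empty_subsetI insert_subset)
      then show False using False by blast
    qed
    then show ?thesis using lin_dep_iff_in_span[OF SC Sli _ False] w colsC by blast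
  qed
  obtain h where h: "bij_betw h {..<card S} S" using ex_bij_betw_nat_finite[OF Sfin] atLeast0LessThan by metis
  have "\<forall>j<nc. \<exists>a. col A j = lincomb a S"
  proof (intro allI impI)
    fix j assume "j < nc"
    then have "col A j \<in> set (cols A)" using A by (simp add: cols_def)
    then show "\<exists>a. col A j = lincomb a S" using inspan finite_span[OF Sfin SC] by blast
  qed
  then obtain a where a: "\<And>j. j < nc \<Longrightarrow> col A j = lincomb (a j) S" by metis
  have "\<forall>i<n. \<forall>j<nc. A $$ (i,j) = (\<Sum>t<card S. h t $ i * a j (h t))"
  proof (intro allI impI)
    fix i j assume i: "i < n" and j: "j < nc"
    have "A $$ (i,j) = col A j $ i" using A i j by simp
    also have "\<dots> = (\<Sum>x\<in>S. a j x * x $ i)" using a[OF j] lincomb_index[OF i SC] by simp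
    also have "\<dots> = (\<Sum>t<card S. a j (h t) * h t $ i)"
      using sum.reindex_bij_betw[OF h, of "\<lambda>x. a j x * x $ i"] by simp
    finally show "A $$ (i,j) = (\<Sum>t<card S. h t $ i * a j (h t))" by (simp add: mult.commute)
  qed
  then show ?thesis unfolding rk
    by (intro exI[of _ "\<lambda>t i. h t $ i"] exI[of _ "\<lambda>t j. a j (h t)"]) simp
qed

lemma mult_if_delta_aux: "(x::'a::comm_ring_1) * (if P then 1 else 0) = (if P then x else 0)"
  by simp

lemma qf_e1:
  fixes M :: "nat \<Rightarrow> nat \<Rightarrow> 'a::comm_ring_1"
  assumes "i < n"
  shows "(\<Sum>k<n. \<Sum>l<n. M k l * (if k = i then 1 else 0) * (if l = i then 1 else 0)) = M i i"
  using assms by (simp add: mult_if_delta_aux)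

lemma qf_e2:
  fixes M :: "nat \<Rightarrow> nat \<Rightarrow> 'a::comm_ring_1"
  assumes "i < n" "j < n"
  shows "(\<Sum>k<n. \<Sum>l<n. M k l * ((if k = i then 1 else 0) + (if k = j then 1 else 0))
     * ((if l = i then 1 else 0) + (if l = j then 1 else 0))) = M i i + M i j + M j i + M j j"
  using assms by (simp add: distrib_left distrib_right mult_if_delta_aux sum.distrib)


theorem lemma2p9:
  fixes p n :: nat
    and Q B :: "nat \<Rightarrow> nat \<Rightarrow> 'a::{field, finite}"
  assumes "prime p"
    and "card (UNIV :: 'a set) = p"
    and "\<forall>x :: nat \<Rightarrow> 'a. qform_eval n Q x = bform_eval n B x x"
  shows "erk_qform n Q \<le> erk_bform n B"
proof -
  have ev: "(\<Sum>k<n. \<Sum>l<n. Q k l * x k * x l) = (\<Sum>k<n. \<Sum>l<n. B k l * x k * x l)" for x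
    using assms(3) unfolding qform_eval_def bform_eval_def by blast
  have diag: "Q i i = B i i" if "i < n" for i
    using ev[of "\<lambda>k. if k = i then 1 else 0"] qf_e1[OF that, of Q] qf_e1[OF that, of B] by simp
  have off: "Q i j + Q j i = B i j + B j i" if "i < n" "j < n" for i j
  proof -
    have "Q i i + Q i j + Q j i + Q j j = B i i + B i j + B j i + B j j"
      using ev[of "\<lambda>k. (if k = i then 1 else 0) + (if k = j then 1 else 0)"]
        qf_e2[OF that, of Q] qf_e2[OF that, of B] by simp
    then show ?thesis using diag that by (simp add: algebra_simps)
  qed
  define P where "P = (\<lambda>r. \<exists>c :: nat \<Rightarrow> 'a.
      r = vec_space.rank n (mat n n (\<lambda>(i, j). B i j + (if i = j then c i else 0))))"
  have "P (LEAST r. P r)" by (rule LeastI_ex) (auto simp: P_def)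
  then obtain c where c: "erk_bform n B = vec_space.rank n (mat n n (\<lambda>(i, j). B i j + (if i = j then c i else 0)))"
    unfolding erk_bform_def P_def by blast
  define r where "r = erk_bform n B"
  obtain u v where uv: "\<forall>i<n. \<forall>j<n. (mat n n (\<lambda>(i, j). B i j + (if i = j then c i else 0))) $$ (i,j)
      = (\<Sum>t<r. u t i * v t j)"
    using rank_factor[of "mat n n (\<lambda>(i, j). B i j + (if i = j then c i else 0))" n n] c r_def by auto
  have uv': "B i j + (if i = j then c i else 0) = (\<Sum>t<r. u t i * v t j)" if "i < n" "j < n" for i j
    using uv that by auto
  have d1: "c j + B j j = (\<Sum>t<r. u t j * v t j)" if "j < n" for j
    using uv'[of j j] that by (simp add: add.commute)
  have d2: "B i j = (\<Sum>t<r. u t i * v t j)" if "i < n" "j < n" "i \<noteq> j" for i j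
    using uv'[of i j] that by simp
  define a where "a = (\<lambda>i. c i + B i i - Q i i)"
  have eq: "poly2_eq n (qform_poly n (\<lambda>i j. Q i j + (if i = j then a i else 0)))
      (poly2_sum (\<lambda>t. poly1_mult ((0::'a), u t) (0, v t)) r)"
    unfolding poly2_eq_def qform_poly_def poly2_sum_def poly1_mult_def mono_coeff_def
    using d1 d2 off by (auto simp: a_def diag)
  have "rk_poly2 n (qform_poly n (\<lambda>i j. Q i j + (if i = j then a i else 0))) \<le> r"
    unfolding rk_poly2_def by (rule Least_le) (rule exI[of _ "\<lambda>t. ((0::'a), u t)"], rule exI[of _ "\<lambda>t. ((0::'a), v t)"], rule eq)
  moreover have "erk_qform n Q \<le> rk_poly2 n (qform_poly n (\<lambda>i j. Q i j + (if i = j then a i else 0)))"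
    unfolding erk_qform_def by (rule Least_le) blast
  ultimately show ?thesis unfolding r_def by linarith
qed

end
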